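(* Suppose $\theta_i=\vartheta$ for all $i\in\{1,\dots,n\}$, with $\vartheta\in(0,1)$, and that $C$ is doubly-stochastic with zero diagonal. Then for every $x(0)\in\Delta_n$ the trajectory of system (B) satisfies that $x(k)$ converges exponentially to $\mathbf 1_n/n$.
   Context: Let $n\ge 2$, $\mathbf 1_n$ the all-ones vector, $I_n$ the identity matrix, $\Delta_n=\{x\in\mathbb R^n: x\ge 0,\ \mathbf 1_n^Tx=1\}$. Let $C\in\mathbb R^{n\times n}$ be a nonnegative matrix with zero diagonal (doubly-stochastic: all row sums and column sums equal $1$), $\theta=(\theta_1,\dots,\theta_n)\in[0,1]^n$, $\Theta=\mathrm{diag}(\theta)$, and for $x\in\mathbb R^n$, $W(x)=\mathrm{diag}(x)+(I_n-\mathrm{diag}(x))C$. System (B): $V(k+1)=\Theta W(x(k))V(k)+I_n-\Theta$, $x(k+1)=V(k+1)^T\mathbf 1_n/n$, $k=0,1,2,\dots$, with $V(0)=I_n$ and $x(0)\in\Delta_n$. *)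

theory Defs
  imports "HOL-Analysis.Analysis"
begin

definition diag_mat :: "real^'n \<Rightarrow> real^'n^'n" where
  "diag_mat v = (\<chi> i j. if i = j then v $ i else 0)"

definition prob_simplex :: "(real^'n) set" where
  "prob_simplex = {x. (\<forall>i. x $ i \<ge> 0) \<and> (\<Sum>i\<in>UNIV. x $ i) = 1}"

definition doubly_stochastic_zero_diag :: "real^'n^'n \<Rightarrow> bool" where
  "doubly_stochastic_zero_diag C \<longleftrightarrow>
     (\<forall>i j. C $ i $ j \<ge> 0) \<and> (\<forall>i. C $ i $ i = 0) \<and>
     (\<forall>i. (\<Sum>j\<in>UNIV. C $ i $ j) = 1) \<and> (\<forall>j. (\<Sum>i\<in>UNIV. C $ i $ j) = 1)"

definition Wmat :: "real^'n^'n \<Rightarrow> real^'n \<Rightarrow> real^'n^'n" where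
  "Wmat C x = diag_mat x + (mat 1 - diag_mat x) ** C"

fun sysB :: "real^'n^'n \<Rightarrow> real^'n \<Rightarrow> real^'n \<Rightarrow> nat \<Rightarrow> (real^'n^'n) \<times> (real^'n)" where
  "sysB C \<theta> x0 0 = (mat 1, x0)"
| "sysB C \<theta> x0 (Suc k) =
     (let V = fst (sysB C \<theta> x0 k); x = snd (sysB C \<theta> x0 k);
          V' = diag_mat \<theta> ** Wmat C x ** V + (mat 1 - diag_mat \<theta>)
      in (V', (1 / real CARD('n)) *\<^sub>R (transpose V' *v (\<chi> i. 1))))"

end

theory Submission
  imports Defs
begin


lemma Wmat_entry: "Wmat C x $ i $ l = (if i = l then x$i else 0) + (1 - x$i) * C$i$l"
proof -
  have "(\<Sum>k\<in>UNIV. (mat 1 - diag_mat x) $ i $ k * C $ k $ l) = (\<Sum>k\<in>UNIV. (if k = i then (1 - x$i) * C$i$l else 0))"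
    by (rule sum.cong) (auto simp: diag_mat_def mat_def)
  thus ?thesis by (simp add: Wmat_def diag_mat_def matrix_matrix_mult_def)
qed

lemma half_bound:
  fixes f :: "'n::finite \<Rightarrow> real"
  assumes "sum f UNIV = 0"
  shows "2 * \<bar>f i\<bar> \<le> (\<Sum>j\<in>UNIV. \<bar>f j\<bar>)"
proof -
  have "sum f UNIV = f i + sum f (UNIV - {i})" by (simp add: sum.remove)
  hence "\<bar>f i\<bar> = \<bar>sum f (UNIV - {i})\<bar>" using assms by linarith
  also have "\<dots> \<le> (\<Sum>j\<in>UNIV - {i}. \<bar>f j\<bar>)" by (rule sum_abs)
  finally have "\<bar>f i\<bar> \<le> (\<Sum>j\<in>UNIV - {i}. \<bar>f j\<bar>)" .
  moreover have "(\<Sum>j\<in>UNIV. \<bar>f j\<bar>) = \<bar>f i\<bar> + (\<Sum>j\<in>UNIV - {i}. \<bar>f j\<bar>)" by (simp add: sum.remove)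
  ultimately show ?thesis by linarith
qed

lemma step:
  fixes V Vs V' C :: "real^'n::finite^'n" and x :: "real^'n" and t M :: real
  defines "N \<equiv> real CARD('n)"
  assumes Cnn: "\<forall>i j. 0 \<le> C$i$j" and Crow: "\<forall>i. (\<Sum>j\<in>UNIV. C$i$j) = 1"
    and t0: "0 < t" and t1: "t < 1" and n2: "CARD('n) \<ge> 2"
    and Vnn: "\<forall>i j. 0 \<le> V$i$j" and Vrow: "\<forall>i. (\<Sum>j\<in>UNIV. V$i$j) = 1"
    and xdef: "\<forall>j. x$j = (1/N) * (\<Sum>i\<in>UNIV. V$i$j)"
    and Vsnn: "\<forall>i j. 0 \<le> Vs$i$j" and Vsrow: "\<forall>i. (\<Sum>j\<in>UNIV. Vs$i$j) = 1"
    and Vscol: "\<forall>j. (\<Sum>i\<in>UNIV. Vs$i$j) = 1"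
    and Vsfix: "\<forall>i j. Vs$i$j = t * (\<Sum>l\<in>UNIV. Wmat C (\<chi> i. 1/N) $ i $ l * Vs$l$j) + (if i = j then 1 - t else 0)"
    and Vskap: "\<forall>i j. (\<Sum>l\<in>UNIV. ((if i = l then 1 else 0) - C$i$l) * Vs$l$j) = (N/(N-1)*(1-t)/t) * ((if i = j then 1 else 0) - Vs$i$j)"
    and Mb: "\<forall>l. (\<Sum>j\<in>UNIV. \<bar>V$l$j - Vs$l$j\<bar>) \<le> M"
    and V'def: "\<forall>i j. V'$i$j = t * (\<Sum>l\<in>UNIV. Wmat C x $ i $ l * V$l$j) + (if i = j then 1 - t else 0)"
  shows "(\<Sum>j\<in>UNIV. \<bar>V'$i$j - Vs$i$j\<bar>) \<le> (t + N/(N-1)*(1-t)*(1 - Vs$i$i)) * M"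
proof -
  define kap where "kap = N/(N-1)*(1-t)/t"
  have N2: "N \<ge> 2" using n2 unfolding N_def by simp
  have xsum: "(\<Sum>j\<in>UNIV. x$j) = 1"
  proof -
    have "(\<Sum>j\<in>UNIV. x$j) = (1/N) * (\<Sum>j\<in>UNIV. \<Sum>i\<in>UNIV. V$i$j)"
      using xdef by (simp add: sum_distrib_left)
    also have "(\<Sum>j\<in>UNIV. \<Sum>i\<in>UNIV. V$i$j) = (\<Sum>i\<in>UNIV. \<Sum>j\<in>UNIV. V$i$j)" by (rule sum.swap)
    also have "\<dots> = N" using Vrow by (simp add: N_def)
    finally show ?thesis using N2 by simp
  qed
  have xnn: "\<forall>j. 0 \<le> x$j" using xdef Vnn N2 by (simp add: sum_nonneg)
  have xle: "x$i \<le> 1"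
  proof -
    have "x$i \<le> (\<Sum>j\<in>UNIV. x$j)" by (rule member_le_sum) (use xnn in auto)
    thus ?thesis using xsum by simp
  qed
  define e where "e = x$i - 1/N"
  have Wnn: "\<forall>l. 0 \<le> Wmat C x $ i $ l" using xnn xle Cnn by (simp add: Wmat_entry)
  have Wrow: "(\<Sum>l\<in>UNIV. Wmat C x $ i $ l) = 1"
    using Crow[rule_format, of i] by (simp add: Wmat_entry sum.distrib sum_distrib_left[symmetric])
  have We: "\<forall>l. Wmat C x $ i $ l = Wmat C (\<chi> i. 1/N) $ i $ l + e * ((if i = l then 1 else 0) - C$i$l)"
    by (simp add: Wmat_entry e_def algebra_simps)
  have D: "V'$i$j - Vs$i$j = t * (\<Sum>l\<in>UNIV. Wmat C x $ i $ l * (V$l$j - Vs$l$j))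
      + t * e * kap * ((if i = j then 1 else 0) - Vs$i$j)" for j
  proof -
    have "(\<Sum>l\<in>UNIV. Wmat C x $ i $ l * V$l$j) = (\<Sum>l\<in>UNIV. Wmat C x $ i $ l * (V$l$j - Vs$l$j))
       + (\<Sum>l\<in>UNIV. Wmat C (\<chi> i. 1/N) $ i $ l * Vs$l$j)
       + e * (\<Sum>l\<in>UNIV. ((if i = l then 1 else 0) - C$i$l) * Vs$l$j)"
    proof -
      have "(\<Sum>l\<in>UNIV. Wmat C x $ i $ l * V$l$j) = (\<Sum>l\<in>UNIV. Wmat C x $ i $ l * (V$l$j - Vs$l$j))
         + (\<Sum>l\<in>UNIV. Wmat C x $ i $ l * Vs$l$j)"
        by (simp add: sum.distrib[symmetric] algebra_simps)
      moreover have "(\<Sum>l\<in>UNIV. Wmat C x $ i $ l * Vs$l$j) = (\<Sum>l\<in>UNIV. Wmat C (\<chi> i. 1/N) $ i $ l * Vs$l$j)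
         + e * (\<Sum>l\<in>UNIV. ((if i = l then 1 else 0) - C$i$l) * Vs$l$j)"
        by (simp only: We) (simp add: sum.distrib sum_distrib_left algebra_simps sum_subtractf)
      ultimately show ?thesis by simp
    qed
    also have "(\<Sum>l\<in>UNIV. ((if i = l then 1 else 0) - C$i$l) * Vs$l$j) = kap * ((if i = j then 1 else 0) - Vs$i$j)"
      using Vskap kap_def by simp
    finally have eqA: "(\<Sum>l\<in>UNIV. Wmat C x $ i $ l * V$l$j) = (\<Sum>l\<in>UNIV. Wmat C x $ i $ l * (V$l$j - Vs$l$j))
       + (\<Sum>l\<in>UNIV. Wmat C (\<chi> i. 1/N) $ i $ l * Vs$l$j) + e * (kap * ((if i = j then 1 else 0) - Vs$i$j))" .
    have "V'$i$j - Vs$i$j = t * ((\<Sum>l\<in>UNIV. Wmat C x $ i $ l * V$l$j) - (\<Sum>l\<in>UNIV. Wmat C (\<chi> i. 1/N) $ i $ l * Vs$l$j))"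
      using V'def[rule_format, of i j] Vsfix[rule_format, of i j] by (simp only: right_diff_distrib)
    also have "\<dots> = t * ((\<Sum>l\<in>UNIV. Wmat C x $ i $ l * (V$l$j - Vs$l$j)) + e * (kap * ((if i = j then 1 else 0) - Vs$i$j)))"
      using eqA by simp
    finally show ?thesis by (simp add: algebra_simps)
  qed
  have ee: "e = (1/N) * (\<Sum>l\<in>UNIV. V$l$i - Vs$l$i)"
    using xdef Vscol N2 by (simp add: e_def sum_subtractf right_diff_distrib)
  have "\<bar>e\<bar> \<le> (1/N) * (\<Sum>l\<in>UNIV. \<bar>V$l$i - Vs$l$i\<bar>)"
    unfolding ee using N2 by (simp add: abs_mult divide_right_mono sum_abs)
  also have "\<dots> \<le> (1/N) * (\<Sum>l\<in>(UNIV::'n set). M/2)"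
  proof -
    have "\<bar>V$l$i - Vs$l$i\<bar> \<le> M/2" for l
    proof -
      have "(\<Sum>j\<in>UNIV. V$l$j - Vs$l$j) = 0" using Vrow Vsrow by (simp add: sum_subtractf)
      from half_bound[OF this, of i] Mb[rule_format, of l] show ?thesis by simp
    qed
    thus ?thesis using N2 by (intro mult_left_mono sum_mono) auto
  qed
  also have "\<dots> = M/2" using N2 by (simp add: N_def)
  finally have eb: "\<bar>e\<bar> \<le> M/2" .
  have kap0: "kap \<ge> 0" using N2 t0 t1 by (simp add: kap_def)
  have dsum: "(\<Sum>j\<in>UNIV. \<bar>(if i = j then 1 else 0) - Vs$i$j\<bar>) = 2 * (1 - Vs$i$i)"
  proof -
    have Vsle: "Vs$i$i \<le> 1"
    proof -
      have "Vs$i$i \<le> (\<Sum>j\<in>UNIV. Vs$i$j)" by (rule member_le_sum) (use Vsnn in auto)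
      thus ?thesis using Vsrow by simp
    qed
    have ptw: "\<bar>(if i = j then 1 else 0) - Vs$i$j\<bar> = Vs$i$j + (if i = j then 1 - 2 * Vs$i$j else 0)" for j
      using Vsnn Vsle by auto
    have "(\<Sum>j\<in>UNIV. \<bar>(if i = j then 1 else 0) - Vs$i$j\<bar>) = (\<Sum>j\<in>UNIV. Vs$i$j + (if i = j then 1 - 2 * Vs$i$j else 0))"
      by (rule sum.cong) (use ptw in auto)
    also have "\<dots> = (\<Sum>j\<in>UNIV. Vs$i$j) + (1 - 2 * Vs$i$i)"
      by (simp add: sum.distrib)
    finally have "(\<Sum>j\<in>UNIV. \<bar>(if i = j then 1 else 0) - Vs$i$j\<bar>) = (\<Sum>j\<in>UNIV. Vs$i$j) + (1 - 2 * Vs$i$i)" .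
    thus ?thesis using Vsrow by simp
  qed
  have "(\<Sum>j\<in>UNIV. \<bar>V'$i$j - Vs$i$j\<bar>) \<le> (\<Sum>j\<in>UNIV. t * (\<Sum>l\<in>UNIV. Wmat C x $ i $ l * \<bar>V$l$j - Vs$l$j\<bar>)
      + t * \<bar>e\<bar> * kap * \<bar>(if i = j then 1 else 0) - Vs$i$j\<bar>)"
  proof (rule sum_mono)
    fix j
    have "\<bar>\<Sum>l\<in>UNIV. Wmat C x $ i $ l * (V$l$j - Vs$l$j)\<bar> \<le> (\<Sum>l\<in>UNIV. Wmat C x $ i $ l * \<bar>V$l$j - Vs$l$j\<bar>)"
    proof -
      have "\<bar>\<Sum>l\<in>UNIV. Wmat C x $ i $ l * (V$l$j - Vs$l$j)\<bar> \<le> (\<Sum>l\<in>UNIV. \<bar>Wmat C x $ i $ l * (V$l$j - Vs$l$j)\<bar>)"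
        by (rule sum_abs)
      also have "\<dots> = (\<Sum>l\<in>UNIV. Wmat C x $ i $ l * \<bar>V$l$j - Vs$l$j\<bar>)"
        using Wnn by (simp add: abs_mult)
      finally show ?thesis .
    qed
    thus "\<bar>V'$i$j - Vs$i$j\<bar> \<le> t * (\<Sum>l\<in>UNIV. Wmat C x $ i $ l * \<bar>V$l$j - Vs$l$j\<bar>)
      + t * \<bar>e\<bar> * kap * \<bar>(if i = j then 1 else 0) - Vs$i$j\<bar>"
    proof -
      have "\<bar>V'$i$j - Vs$i$j\<bar> \<le> \<bar>t * (\<Sum>l\<in>UNIV. Wmat C x $ i $ l * (V$l$j - Vs$l$j))\<bar>
          + \<bar>t * e * kap * ((if i = j then 1 else 0) - Vs$i$j)\<bar>"
        unfolding D by (rule abs_triangle_ineq)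
      also have "\<bar>t * (\<Sum>l\<in>UNIV. Wmat C x $ i $ l * (V$l$j - Vs$l$j))\<bar>
          = t * \<bar>\<Sum>l\<in>UNIV. Wmat C x $ i $ l * (V$l$j - Vs$l$j)\<bar>"
        using t0 by (simp add: abs_mult)
      also have "\<bar>t * e * kap * ((if i = j then 1 else 0) - Vs$i$j)\<bar>
          = t * \<bar>e\<bar> * kap * \<bar>(if i = j then 1 else 0) - Vs$i$j\<bar>"
        using t0 kap0 by (simp add: abs_mult)
      finally show ?thesis using \<open>\<bar>\<Sum>l\<in>UNIV. Wmat C x $ i $ l * (V$l$j - Vs$l$j)\<bar> \<le> _\<close> t0
        by (smt (verit) mult_left_mono)
    qed
  qed
  also have "\<dots> = t * (\<Sum>l\<in>UNIV. Wmat C x $ i $ l * (\<Sum>j\<in>UNIV. \<bar>V$l$j - Vs$l$j\<bar>))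
      + t * \<bar>e\<bar> * kap * (2 * (1 - Vs$i$i))"
  proof -
    have sw: "(\<Sum>j\<in>UNIV. \<Sum>l\<in>UNIV. Wmat C x $ i $ l * \<bar>V$l$j - Vs$l$j\<bar>)
        = (\<Sum>l\<in>UNIV. Wmat C x $ i $ l * (\<Sum>j\<in>UNIV. \<bar>V$l$j - Vs$l$j\<bar>))"
      by (subst sum.swap) (simp add: sum_distrib_left)
    have "(\<Sum>j\<in>UNIV. t * (\<Sum>l\<in>UNIV. Wmat C x $ i $ l * \<bar>V$l$j - Vs$l$j\<bar>)
      + t * \<bar>e\<bar> * kap * \<bar>(if i = j then 1 else 0) - Vs$i$j\<bar>)
      = t * (\<Sum>j\<in>UNIV. \<Sum>l\<in>UNIV. Wmat C x $ i $ l * \<bar>V$l$j - Vs$l$j\<bar>)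
      + t * \<bar>e\<bar> * kap * (\<Sum>j\<in>UNIV. \<bar>(if i = j then 1 else 0) - Vs$i$j\<bar>)"
      by (simp only: sum.distrib sum_distrib_left)
    thus ?thesis by (simp only: sw dsum)
  qed
  also have "\<dots> \<le> t * (\<Sum>l\<in>UNIV. Wmat C x $ i $ l * M) + t * (M/2) * kap * (2 * (1 - Vs$i$i))"
  proof -
    have "(\<Sum>l\<in>UNIV. Wmat C x $ i $ l * (\<Sum>j\<in>UNIV. \<bar>V$l$j - Vs$l$j\<bar>)) \<le> (\<Sum>l\<in>UNIV. Wmat C x $ i $ l * M)"
      using Wnn Mb by (intro sum_mono mult_left_mono) auto
    moreover have "1 - Vs$i$i \<ge> 0"
    proof -
      have "Vs$i$i \<le> (\<Sum>j\<in>UNIV. Vs$i$j)" by (rule member_le_sum) (use Vsnn in auto)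
      thus ?thesis using Vsrow by simp
    qed
    ultimately show ?thesis using t0 kap0 eb
      by (intro add_mono mult_left_mono mult_right_mono) auto
  qed
  also have "\<dots> = (t + N/(N-1)*(1-t)*(1 - Vs$i$i)) * M"
  proof -
    have "(\<Sum>l\<in>UNIV. Wmat C x $ i $ l * M) = M" using Wrow by (simp add: sum_distrib_right[symmetric])
    moreover have "N - 1 \<noteq> 0" using N2 by simp
    ultimately show ?thesis using t0 by (simp add: kap_def field_simps)
  qed
  finally show ?thesis .
qed



lemma quad_le:
  fixes W :: "'n::finite \<Rightarrow> 'n \<Rightarrow> real" and v :: "'n \<Rightarrow> real"
  assumes nn: "\<forall>j l. 0 \<le> W j l" and row: "\<forall>j. (\<Sum>l\<in>UNIV. W j l) = 1" and col: "\<forall>l. (\<Sum>j\<in>UNIV. W j l) = 1"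
  shows "(\<Sum>j\<in>UNIV. \<Sum>l\<in>UNIV. W j l * v l * v j) \<le> (\<Sum>j\<in>UNIV. v j ^ 2)"
proof -
  have "(\<Sum>j\<in>UNIV. \<Sum>l\<in>UNIV. W j l * v l * v j) \<le> (\<Sum>j\<in>UNIV. \<Sum>l\<in>UNIV. W j l * (v l ^ 2 + v j ^ 2) / 2)"
  proof (intro sum_mono)
    fix j l
    have "2 * v l * v j \<le> v l ^ 2 + v j ^ 2" by (rule sum_squares_bound)
    hence "v l * v j \<le> (v l ^ 2 + v j ^ 2) / 2" by simp
    thus "W j l * v l * v j \<le> W j l * (v l ^ 2 + v j ^ 2) / 2"
      using nn mult_left_mono[of "v l * v j" "(v l ^ 2 + v j ^ 2) / 2" "W j l"] by (simp add: mult.assoc)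
  qed
  also have "\<dots> = ((\<Sum>j\<in>UNIV. \<Sum>l\<in>UNIV. W j l * v l ^ 2) + (\<Sum>j\<in>UNIV. \<Sum>l\<in>UNIV. W j l * v j ^ 2)) / 2"
    by (simp add: sum.distrib sum_divide_distrib[symmetric] algebra_simps)
  also have "(\<Sum>j\<in>UNIV. \<Sum>l\<in>UNIV. W j l * v l ^ 2) = (\<Sum>l\<in>UNIV. v l ^ 2)"
    by (subst sum.swap) (simp add: sum_distrib_right[symmetric] col)
  also have "(\<Sum>j\<in>UNIV. \<Sum>l\<in>UNIV. W j l * v j ^ 2) = (\<Sum>j\<in>UNIV. v j ^ 2)"
    by (simp add: sum_distrib_right[symmetric] row)
  finally show ?thesis by simp
qed

lemma Ws_entry: "Wmat C (\<chi> i. 1 / real CARD('n::finite)) $ i $ l = (if i = l then 1 / real CARD('n) else 0) + (1 - 1 / real CARD('n)) * (C::real^'n^'n)$i$l"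
  by (simp add: Wmat_entry)

lemma max_abs_exists:
  fixes v :: "real^'n::finite"
  obtains i where "\<forall>j. \<bar>v$j\<bar> \<le> \<bar>v$i\<bar>"
proof -
  have "finite (range (\<lambda>j. \<bar>v$j\<bar>))" by simp
  hence "Max (range (\<lambda>j. \<bar>v$j\<bar>)) \<in> range (\<lambda>j. \<bar>v$j\<bar>)" by (intro Max_in) auto
  then obtain i where i: "Max (range (\<lambda>j. \<bar>v$j\<bar>)) = \<bar>v$i\<bar>" by (metis rangeE)
  have "\<forall>j. \<bar>v$j\<bar> \<le> \<bar>v$i\<bar>" unfolding i[symmetric] by (auto intro: Max_ge)
  thus ?thesis using that by blast
qed



lemma delta_sum1: fixes i :: "'n::finite" shows "(\<Sum>l\<in>UNIV. (if i = l then 1 else 0) * f l) = (f i :: real)"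
proof -
  have "(\<Sum>l\<in>UNIV. (if i = l then 1 else 0) * f l) = (\<Sum>l\<in>UNIV. (if i = l then f l else 0))"
    by (rule sum.cong) auto
  thus ?thesis by (simp add: sum.delta sum.delta')
qed

lemma delta_sum2: fixes i :: "'n::finite" shows "(\<Sum>l\<in>UNIV. (if l = i then 1 else 0) * f l) = (f i :: real)"
proof -
  have "(\<Sum>l\<in>UNIV. (if l = i then 1 else 0) * f l) = (\<Sum>l\<in>UNIV. (if l = i then f l else 0))"
    by (rule sum.cong) auto
  thus ?thesis by (simp add: sum.delta sum.delta')
qed

lemma kap_alg:
  fixes N t V S d :: real
  assumes "N \<ge> 2" "0 < t" "V = t * (V/N + (1 - 1/N) * S) + d * (1 - t)"
  shows "V - S = (N/(N-1)*(1-t)/t) * (d - V)"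
proof -
  have "N - 1 > 0" using assms by simp
  from assms(3) have "N * V = t * V + t * (N - 1) * S + N * d * (1 - t)"
    using assms(1) by (simp add: field_simps)
  hence "t * (N - 1) * (V - S) = N * (1 - t) * (d - V)" by (simp add: algebra_simps)
  thus ?thesis using \<open>N - 1 > 0\<close> assms(2) by (simp add: field_simps)
qed

lemma min_exists:
  fixes f :: "'n::finite \<Rightarrow> real"
  obtains i where "\<forall>j. f i \<le> f j"
proof -
  have "finite (range f)" by simp
  hence "Min (range f) \<in> range f" by (intro Min_in) auto
  then obtain i where i: "Min (range f) = f i" by (metis rangeE)
  have "\<forall>j. f i \<le> f j" unfolding i[symmetric] by (auto intro: Min_le)
  thus ?thesis using that by blast
qed

lemma Vstar:
  fixes C :: "real^'n::finite^'n" and t :: real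
  defines "N \<equiv> real CARD('n)"
  assumes Cnn: "\<forall>i j. 0 \<le> C$i$j" and Crow: "\<forall>i. (\<Sum>j\<in>UNIV. C$i$j) = 1"
    and Ccol: "\<forall>j. (\<Sum>i\<in>UNIV. C$i$j) = 1"
    and t0: "0 < t" and t1: "t < 1" and n2: "CARD('n) \<ge> 2"
  obtains Vs :: "real^'n^'n" where
    "\<forall>i j. 0 \<le> Vs$i$j" "\<forall>i. (\<Sum>j\<in>UNIV. Vs$i$j) = 1" "\<forall>j. (\<Sum>i\<in>UNIV. Vs$i$j) = 1"
    "\<forall>i j. Vs$i$j = t * (\<Sum>l\<in>UNIV. Wmat C (\<chi> i. 1/N) $ i $ l * Vs$l$j) + (if i = j then 1 - t else 0)"
    "\<forall>i j. (\<Sum>l\<in>UNIV. ((if i = l then 1 else 0) - C$i$l) * Vs$l$j) = (N/(N-1)*(1-t)/t) * ((if i = j then 1 else 0) - Vs$i$j)"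
    "\<forall>i. Vs$i$i > 1/N"
proof -
  have N2: "N \<ge> 2" using n2 unfolding N_def by simp
  define Ws :: "real^'n^'n" where "Ws = Wmat C (\<chi> i. 1/N)"
  have Wse: "Ws$i$l = (if i = l then 1/N else 0) + (1 - 1/N) * C$i$l" for i l
    unfolding Ws_def N_def by (rule Ws_entry)
  have Wsnn: "\<forall>i l. 0 \<le> Ws$i$l" using Cnn N2 by (simp add: Wse)
  have Wsrow: "\<forall>i. (\<Sum>l\<in>UNIV. Ws$i$l) = 1"
    using Crow N2 by (simp add: Wse sum.distrib sum_distrib_left[symmetric])
  have Wscol: "\<forall>l. (\<Sum>i\<in>UNIV. Ws$i$l) = 1"
    using Ccol N2 by (simp add: Wse sum.distrib sum_distrib_left[symmetric])
  define A :: "real^'n^'n" where "A = (\<chi> i l. (if i = l then 1 else 0) - t * Ws$i$l)"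
  have Av: "(A *v v)$i = v$i - t * (\<Sum>l\<in>UNIV. Ws$i$l * v$l)" for v i
  proof -
    have "(A *v v)$i = (\<Sum>l\<in>UNIV. (if i = l then v$l else 0) - t * (Ws$i$l * v$l))"
      unfolding A_def matrix_vector_mult_def vec_lambda_beta by (intro sum.cong) (auto simp: algebra_simps)
    thus ?thesis by (simp add: sum_subtractf sum_distrib_left)
  qed
  have inj: "v = 0" if hv: "\<forall>i. v$i = t * (\<Sum>l\<in>UNIV. Ws$i$l * v$l)" for v :: "real^'n"
  proof -
    obtain i where mx: "\<forall>j. \<bar>v$j\<bar> \<le> \<bar>v$i\<bar>" by (rule max_abs_exists)
    have "\<bar>v$i\<bar> = \<bar>t * (\<Sum>l\<in>UNIV. Ws$i$l * v$l)\<bar>" using hv by metis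
    also have "\<dots> = t * \<bar>\<Sum>l\<in>UNIV. Ws$i$l * v$l\<bar>" using t0 by (simp add: abs_mult)
    also have "\<dots> \<le> t * (\<Sum>l\<in>UNIV. Ws$i$l * \<bar>v$i\<bar>)"
    proof -
      have "\<bar>\<Sum>l\<in>UNIV. Ws$i$l * v$l\<bar> \<le> (\<Sum>l\<in>UNIV. \<bar>Ws$i$l * v$l\<bar>)" by (rule sum_abs)
      also have "\<dots> \<le> (\<Sum>l\<in>UNIV. Ws$i$l * \<bar>v$i\<bar>)"
        using Wsnn mx by (intro sum_mono) (simp add: abs_mult mult_left_mono)
      finally show ?thesis using t0 by simp
    qed
    also have "\<dots> = t * \<bar>v$i\<bar>" using Wsrow by (simp add: sum_distrib_right[symmetric])
    finally have h: "\<bar>v$i\<bar> \<le> t * \<bar>v$i\<bar>" .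
    have "\<bar>v$i\<bar> \<le> 0"
    proof (rule ccontr)
      assume "\<not> \<bar>v$i\<bar> \<le> 0"
      hence "t * \<bar>v$i\<bar> < 1 * \<bar>v$i\<bar>" using t1 by (intro mult_strict_right_mono) auto
      thus False using h by simp
    qed
    hence "\<bar>v$j\<bar> \<le> 0" for j using mx order_trans by blast
    hence "\<forall>j. v$j = 0" by simp
    thus ?thesis by (simp add: vec_eq_iff)
  qed
  have "\<exists>B. B ** A = mat 1"
    unfolding matrix_left_invertible_ker
  proof (intro allI impI)
    fix v :: "real^'n" assume "A *v v = 0"
    have "\<forall>i. v$i = t * (\<Sum>l\<in>UNIV. Ws$i$l * v$l)"
    proof
      fix i
      have "(A *v v)$i = 0" using \<open>A *v v = 0\<close> by simp
      thus "v$i = t * (\<Sum>l\<in>UNIV. Ws$i$l * v$l)" unfolding Av by simp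
    qed
    thus "v = 0" by (rule inj)
  qed
  then obtain B where "B ** A = mat 1" by blast
  hence AB: "A ** B = mat 1" by (simp add: matrix_left_right_inverse)
  define Vs :: "real^'n^'n" where "Vs = (\<chi> i j. (1 - t) * B$i$j)"
  have Vfix: "\<forall>i j. Vs$i$j = t * (\<Sum>l\<in>UNIV. Ws$i$l * Vs$l$j) + (if i = j then 1 - t else 0)"
  proof (intro allI)
    fix i j
    have "(A ** B)$i$j = (\<Sum>l\<in>UNIV. (if i = l then B$l$j else 0) - t * (Ws$i$l * B$l$j))"
      unfolding A_def matrix_matrix_mult_def vec_lambda_beta by (intro sum.cong) (auto simp: algebra_simps)
    also have "\<dots> = B$i$j - t * (\<Sum>l\<in>UNIV. Ws$i$l * B$l$j)" by (simp add: sum_subtractf sum_distrib_left)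
    finally have "B$i$j - t * (\<Sum>l\<in>UNIV. Ws$i$l * B$l$j) = (if i = j then 1 else 0)"
      using AB by (simp add: mat_def)
    hence Bij: "B$i$j = t * (\<Sum>l\<in>UNIV. Ws$i$l * B$l$j) + (if i = j then 1 else 0)" by linarith
    have sc: "(\<Sum>l\<in>UNIV. Ws$i$l * ((1-t) * B$l$j)) = (1-t) * (\<Sum>l\<in>UNIV. Ws$i$l * B$l$j)"
      by (simp add: sum_distrib_left algebra_simps)
    have "(1-t) * B$i$j = t * (\<Sum>l\<in>UNIV. Ws$i$l * ((1-t) * B$l$j)) + (if i = j then 1 - t else 0)"
      unfolding sc by (subst Bij) (simp add: algebra_simps)
    thus "Vs$i$j = t * (\<Sum>l\<in>UNIV. Ws$i$l * Vs$l$j) + (if i = j then 1 - t else 0)"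
      by (simp add: Vs_def)
  qed
  have rsum: "(\<Sum>j\<in>UNIV. Vs$i$j) = t * (\<Sum>l\<in>UNIV. Ws$i$l * (\<Sum>j\<in>UNIV. Vs$l$j)) + (1 - t)" for i
  proof -
    have "(\<Sum>j\<in>UNIV. Vs$i$j) = (\<Sum>j\<in>UNIV. t * (\<Sum>l\<in>UNIV. Ws$i$l * Vs$l$j) + (if i = j then 1 - t else 0))"
      by (rule sum.cong) (rule refl, rule Vfix[rule_format])
    also have "\<dots> = t * (\<Sum>j\<in>UNIV. \<Sum>l\<in>UNIV. Ws$i$l * Vs$l$j) + (1 - t)"
      by (simp add: sum.distrib sum_distrib_left)
    also have "(\<Sum>j\<in>UNIV. \<Sum>l\<in>UNIV. Ws$i$l * Vs$l$j) = (\<Sum>l\<in>UNIV. Ws$i$l * (\<Sum>j\<in>UNIV. Vs$l$j))"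
      by (subst sum.swap) (simp add: sum_distrib_left)
    finally show ?thesis .
  qed
  have Vsrow: "\<forall>i. (\<Sum>j\<in>UNIV. Vs$i$j) = 1"
  proof -
    define d :: "real^'n" where "d = (\<chi> i. (\<Sum>j\<in>UNIV. Vs$i$j) - 1)"
    have "\<forall>i. d$i = t * (\<Sum>l\<in>UNIV. Ws$i$l * d$l)"
    proof
      fix i
      have "(\<Sum>l\<in>UNIV. Ws$i$l * d$l) = (\<Sum>l\<in>UNIV. Ws$i$l * (\<Sum>j\<in>UNIV. Vs$l$j) - Ws$i$l)"
        by (simp add: d_def algebra_simps)
      also have "\<dots> = (\<Sum>l\<in>UNIV. Ws$i$l * (\<Sum>j\<in>UNIV. Vs$l$j)) - (\<Sum>l\<in>UNIV. Ws$i$l)"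
        by (rule sum_subtractf)
      finally have h1: "(\<Sum>l\<in>UNIV. Ws$i$l * d$l) = (\<Sum>l\<in>UNIV. Ws$i$l * (\<Sum>j\<in>UNIV. Vs$l$j)) - 1"
        using Wsrow by simp
      show "d$i = t * (\<Sum>l\<in>UNIV. Ws$i$l * d$l)"
        unfolding h1 using rsum[of i] by (simp add: d_def algebra_simps)
    qed
    hence "d = 0" by (rule inj)
    thus ?thesis by (simp add: d_def vec_eq_iff)
  qed
  have Vscol: "\<forall>j. (\<Sum>i\<in>UNIV. Vs$i$j) = 1"
  proof
    fix j
    have "(\<Sum>i\<in>UNIV. Vs$i$j) = (\<Sum>i\<in>UNIV. t * (\<Sum>l\<in>UNIV. Ws$i$l * Vs$l$j) + (if i = j then 1 - t else 0))"
      by (rule sum.cong) (rule refl, rule Vfix[rule_format])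
    also have "\<dots> = t * (\<Sum>i\<in>UNIV. \<Sum>l\<in>UNIV. Ws$i$l * Vs$l$j) + (1 - t)"
      by (simp add: sum.distrib sum_distrib_left)
    also have "(\<Sum>i\<in>UNIV. \<Sum>l\<in>UNIV. Ws$i$l * Vs$l$j) = (\<Sum>l\<in>UNIV. (\<Sum>i\<in>UNIV. Ws$i$l) * Vs$l$j)"
      by (subst sum.swap) (simp add: sum_distrib_right)
    also have "\<dots> = (\<Sum>i\<in>UNIV. Vs$i$j)" using Wscol by simp
    finally have "(1 - t) * (\<Sum>i\<in>UNIV. Vs$i$j) = 1 - t" by (simp add: algebra_simps)
    thus "(\<Sum>i\<in>UNIV. Vs$i$j) = 1" using t1 by simp
  qed
  have Vsnn: "\<forall>i j. 0 \<le> Vs$i$j"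
  proof (intro allI)
    fix i j
    obtain l where ml: "\<forall>k. Vs$l$j \<le> Vs$k$j" by (rule min_exists)
    have "t * Vs$l$j = t * (\<Sum>k\<in>UNIV. Ws$l$k * Vs$l$j)" using Wsrow by (simp add: sum_distrib_right[symmetric])
    also have "\<dots> \<le> t * (\<Sum>k\<in>UNIV. Ws$l$k * Vs$k$j)"
    proof -
      have "Ws$l$k * Vs$l$j \<le> Ws$l$k * Vs$k$j" for k using Wsnn ml by (simp add: mult_left_mono)
      hence "(\<Sum>k\<in>UNIV. Ws$l$k * Vs$l$j) \<le> (\<Sum>k\<in>UNIV. Ws$l$k * Vs$k$j)" by (rule sum_mono)
      thus ?thesis using t0 by (simp add: mult_left_mono)
    qed
    also have "\<dots> \<le> Vs$l$j"
    proof -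
      have "(if l = j then 1 - t else (0::real)) \<ge> 0" using t1 by simp
      thus ?thesis using Vfix[rule_format, of l j] by linarith
    qed
    finally have "(1 - t) * Vs$l$j \<ge> 0" by (simp add: algebra_simps)
    hence "Vs$l$j \<ge> 0" using t1 by (simp add: zero_le_mult_iff)
    thus "0 \<le> Vs$i$j" using ml order_trans by blast
  qed
  have Vskap: "\<forall>i j. (\<Sum>l\<in>UNIV. ((if i = l then 1 else 0) - C$i$l) * Vs$l$j) = (N/(N-1)*(1-t)/t) * ((if i = j then 1 else 0) - Vs$i$j)"
  proof (intro allI)
    fix i j
    define S where "S = (\<Sum>l\<in>UNIV. C$i$l * Vs$l$j)"
    have e1: "(\<Sum>l\<in>UNIV. ((if i = l then 1 else 0) - C$i$l) * Vs$l$j) = Vs$i$j - S"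
      by (simp add: S_def left_diff_distrib sum_subtractf delta_sum1)
    have e2: "(\<Sum>l\<in>UNIV. Ws$i$l * Vs$l$j) = Vs$i$j / N + (1 - 1/N) * S"
    proof -
      have "(\<Sum>l\<in>UNIV. Ws$i$l * Vs$l$j) = (\<Sum>l\<in>UNIV. (if i = l then Vs$l$j / N else 0) + (1 - 1/N) * (C$i$l * Vs$l$j))"
        by (rule sum.cong) (auto simp: Wse algebra_simps)
      also have "\<dots> = (\<Sum>l\<in>UNIV. (if i = l then Vs$l$j / N else 0)) + (\<Sum>l\<in>UNIV. (1 - 1/N) * (C$i$l * Vs$l$j))"
        by (rule sum.distrib)
      also have "\<dots> = Vs$i$j / N + (1 - 1/N) * S"
        by (simp add: sum.delta sum_distrib_left[symmetric] S_def)
      finally show ?thesis .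
    qed
    have "Vs$i$j = t * (Vs$i$j / N + (1 - 1/N) * S) + (if i = j then 1 else 0) * (1 - t)"
      using Vfix[rule_format, of i j] unfolding e2 by (cases "i = j") auto
    from kap_alg[OF N2 t0 this] show "(\<Sum>l\<in>UNIV. ((if i = l then 1 else 0) - C$i$l) * Vs$l$j) = (N/(N-1)*(1-t)/t) * ((if i = j then 1 else 0) - Vs$i$j)"
      unfolding e1 .
  qed
  have Vsdiag: "\<forall>i. Vs$i$i > 1/N"
  proof
    fix i
    define v where "v j = Vs$j$i - 1/N" for j
    define u where "u j = (if j = i then 1 else 0) - 1/N" for j
    have uv: "(1 - t) * u j = v j - t * (\<Sum>l\<in>UNIV. Ws$j$l * v l)" for j
    proof -
      have h: "(\<Sum>l\<in>UNIV. Ws$j$l * v l) = (\<Sum>l\<in>UNIV. Ws$j$l * Vs$l$i) - 1/N"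
        using Wsrow[rule_format, of j] by (simp add: v_def right_diff_distrib sum_subtractf sum_divide_distrib[symmetric])
      have Nnz: "N \<noteq> 0" using N2 by simp
      define d :: real where "d = (if j = i then 1 else 0)"
      define SS where "SS = (\<Sum>l\<in>UNIV. Ws$j$l * Vs$l$i)"
      have ud: "u j = d - 1/N" by (simp add: u_def d_def)
      have vd: "v j = t * SS + d * (1 - t) - 1/N"
        using Vfix[rule_format, of j i] by (cases "j = i") (simp_all add: v_def d_def SS_def)
      show ?thesis unfolding h ud vd SS_def[symmetric] by (simp add: algebra_simps add_divide_distrib[symmetric])
    qed
    have vsum: "(\<Sum>j\<in>UNIV. v j) = 0" using Vscol by (simp add: v_def sum_subtractf N_def)
    have "(\<Sum>j\<in>UNIV. u j * v j) = (\<Sum>j\<in>UNIV. (if j = i then 1 else 0) * v j - (1/N) * v j)"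
      by (simp add: u_def left_diff_distrib)
    also have "\<dots> = (\<Sum>j\<in>UNIV. (if j = i then 1 else 0) * v j) - (1/N) * (\<Sum>j\<in>UNIV. v j)"
      by (simp add: sum_subtractf sum_distrib_left)
    also have "\<dots> = v i" by (simp add: vsum delta_sum2)
    finally have "(\<Sum>j\<in>UNIV. u j * v j) = v i" .
    hence "(1 - t) * v i = (\<Sum>j\<in>UNIV. ((1 - t) * u j) * v j)" by (simp add: mult.assoc flip: sum_distrib_left)
    also have "\<dots> = (\<Sum>j\<in>UNIV. v j ^ 2) - t * (\<Sum>j\<in>UNIV. \<Sum>l\<in>UNIV. Ws$j$l * v l * v j)"
    proof -
      have "(\<Sum>j\<in>UNIV. ((1 - t) * u j) * v j) = (\<Sum>j\<in>UNIV. v j ^ 2 - t * (\<Sum>l\<in>UNIV. Ws$j$l * v l * v j))"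
      proof (rule sum.cong[OF refl])
        fix j
        show "((1 - t) * u j) * v j = v j ^ 2 - t * (\<Sum>l\<in>UNIV. Ws$j$l * v l * v j)"
          unfolding uv by (simp add: power2_eq_square left_diff_distrib sum_distrib_right mult.assoc)
      qed
      also have "\<dots> = (\<Sum>j\<in>UNIV. v j ^ 2) - t * (\<Sum>j\<in>UNIV. \<Sum>l\<in>UNIV. Ws$j$l * v l * v j)"
        by (simp add: sum_subtractf sum_distrib_left)
      finally show ?thesis .
    qed
    also have "\<dots> \<ge> (\<Sum>j\<in>UNIV. v j ^ 2) - t * (\<Sum>j\<in>UNIV. v j ^ 2)"
    proof -
      have q: "(\<Sum>j\<in>UNIV. \<Sum>l\<in>UNIV. Ws$j$l * v l * v j) \<le> (\<Sum>j\<in>UNIV. v j ^ 2)"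
        by (rule quad_le) (use Wsnn Wsrow Wscol in auto)
      have "t * (\<Sum>j\<in>UNIV. \<Sum>l\<in>UNIV. Ws$j$l * v l * v j) \<le> t * (\<Sum>j\<in>UNIV. v j ^ 2)"
        using q t0 by (simp add: mult_left_mono)
      thus ?thesis by linarith
    qed
    finally have vi: "(1 - t) * v i \<ge> (1 - t) * (\<Sum>j\<in>UNIV. v j ^ 2)" by (simp add: algebra_simps)
    hence vi2: "v i \<ge> (\<Sum>j\<in>UNIV. v j ^ 2)" using t1 by simp
    show "Vs$i$i > 1/N"
    proof (rule ccontr)
      assume "\<not> Vs$i$i > 1/N"
      hence "v i \<le> 0" by (simp add: v_def)
      hence "(\<Sum>j\<in>UNIV. v j ^ 2) \<le> 0" using vi2 by simp
      moreover have "(\<Sum>j\<in>UNIV. v j ^ 2) \<ge> 0" by (simp add: sum_nonneg)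
      ultimately have "(\<Sum>j\<in>UNIV. v j ^ 2) = 0" by simp
      hence "\<forall>j\<in>UNIV. v j ^ 2 = 0" by (subst (asm) sum_nonneg_eq_0_iff) auto
      hence v0: "\<forall>j. v j = 0" by simp
      have "(1 - t) * u i = 0" using uv[of i] v0 by simp
      hence "u i = 0" using t1 by simp
      thus False using N2 by (simp add: u_def)
    qed
  qed
  show ?thesis
    by (rule that[OF Vsnn Vsrow Vscol Vfix[unfolded Ws_def] Vskap Vsdiag])
qed



lemma sysB_fst_Suc:
  fixes i j :: "'n::finite"
  shows "fst (sysB C (\<chi> i. t) x0 (Suc k)) $ i $ j =
     t * (\<Sum>l\<in>UNIV. Wmat C (snd (sysB C (\<chi> i. t) x0 k)) $ i $ l * fst (sysB C (\<chi> i. t) x0 k) $ l $ j)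
     + (if i = j then 1 - t else 0)"
proof -
  have D: "(diag_mat (\<chi> i. t) ** A) $ i $ l = t * A$i$l" for A :: "real^'n^'n" and i l :: 'n
  proof -
    have "(diag_mat (\<chi> i. t) ** A) $ i $ l = (\<Sum>k\<in>UNIV. (if k = i then t * A$k$l else 0))"
      unfolding matrix_matrix_mult_def diag_mat_def vec_lambda_beta by (rule sum.cong) auto
    thus ?thesis by simp
  qed
  have M: "mat 1 $ i $ j - diag_mat (\<chi> i. t) $ i $ j = (if i = j then 1 - t else (0::real))" for i j :: 'n
    unfolding mat_def diag_mat_def by simp
  show ?thesis
    by (simp add: Let_def matrix_matrix_mult_def[of "diag_mat _ ** _"] D M sum_distrib_left mult.assoc)
qed

lemma sysB_snd_Suc:
  "snd (sysB C (\<chi> i. t) x0 (Suc k)) $ j =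
     (1 / real CARD('n::finite)) * (\<Sum>i\<in>UNIV. fst (sysB C (\<chi> i. t) x0 (Suc k)) $ i $ (j::'n))"
  by (simp add: Let_def matrix_vector_mult_def transpose_def)

theorem lemma3:
  fixes C :: "real^'n^'n" and \<theta>0 :: real and x0 :: "real^'n"
  assumes "CARD('n) \<ge> 2"
    and "doubly_stochastic_zero_diag C"
    and "0 < \<theta>0" and "\<theta>0 < 1"
    and "x0 \<in> prob_simplex"
  shows "\<exists>c \<rho>. c \<ge> 0 \<and> 0 \<le> \<rho> \<and> \<rho> < 1 \<and>
           (\<forall>k. norm (snd (sysB C (\<chi> i. \<theta>0) x0 k) - (\<chi> i. 1 / real CARD('n))) \<le> c * \<rho> ^ k)"
proof -
  define N where "N = real CARD('n)"
  define t where "t = \<theta>0"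
  have n2: "CARD('n) \<ge> 2" and t0: "0 < t" and t1: "t < 1" using assms by (auto simp: t_def)
  have N2: "N \<ge> 2" using n2 by (simp add: N_def)
  have Cnn: "\<forall>i j. 0 \<le> C$i$j" and Crow: "\<forall>i. (\<Sum>j\<in>UNIV. C$i$j) = 1"
    and Ccol: "\<forall>j. (\<Sum>i\<in>UNIV. C$i$j) = 1"
    using assms(2) by (auto simp: doubly_stochastic_zero_diag_def)
  have x0nn: "\<forall>j. 0 \<le> x0$j" and x0sum: "(\<Sum>j\<in>UNIV. x0$j) = 1"
    using assms(5) by (auto simp: prob_simplex_def)
  obtain Vs :: "real^'n^'n" where
    Vsnn: "\<forall>i j. 0 \<le> Vs$i$j" and Vsrow: "\<forall>i. (\<Sum>j\<in>UNIV. Vs$i$j) = 1" and Vscol: "\<forall>j. (\<Sum>i\<in>UNIV. Vs$i$j) = 1"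
    and Vsfix: "\<forall>i j. Vs$i$j = t * (\<Sum>l\<in>UNIV. Wmat C (\<chi> i. 1/N) $ i $ l * Vs$l$j) + (if i = j then 1 - t else 0)"
    and Vskap: "\<forall>i j. (\<Sum>l\<in>UNIV. ((if i = l then 1 else 0) - C$i$l) * Vs$l$j) = (N/(N-1)*(1-t)/t) * ((if i = j then 1 else 0) - Vs$i$j)"
    and Vsdiag: "\<forall>i. Vs$i$i > 1/N"
    by (rule Vstar[OF Cnn Crow Ccol t0 t1 n2, folded N_def])
  obtain i0 where mi: "\<forall>i. Vs$i0$i0 \<le> Vs$i$i" by (rule min_exists)
  define m where "m = Vs$i0$i0"
  have m1: "m > 1/N" using Vsdiag by (simp add: m_def)
  have mle: "m \<le> 1"
  proof -
    have "Vs$i0$i0 \<le> (\<Sum>j\<in>UNIV. Vs$i0$j)" by (rule member_le_sum) (use Vsnn in auto)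
    thus ?thesis using Vsrow by (simp add: m_def)
  qed
  define \<rho> where "\<rho> = t + N/(N-1)*(1-t)*(1 - m)"
  have Nm1: "N - 1 > 0" using N2 by simp
  have rho_ge: "\<rho> \<ge> t"
    unfolding \<rho>_def using Nm1 t1 mle by (simp add: mult_nonneg_nonneg)
  have rho_lt: "\<rho> < 1"
  proof -
    have "N * (1 - m) < N - 1" using m1 N2 by (simp add: field_simps)
    hence "N/(N-1) * (1 - m) < 1" using Nm1 by (simp add: field_simps)
    hence "N/(N-1)*(1-t)*(1 - m) < 1 - t" using t1
      by (metis mult.commute mult.left_commute mult_less_cancel_left_pos diff_gt_0_iff_gt mult.right_neutral)
    thus ?thesis unfolding \<rho>_def by simp
  qed
  define V where "V k = fst (sysB C (\<chi> i. t) x0 k)" for k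
  define X where "X k = snd (sysB C (\<chi> i. t) x0 k)" for k
  have Vsuc: "V (Suc k) $ i $ j = t * (\<Sum>l\<in>UNIV. Wmat C (X k) $ i $ l * V k $ l $ j) + (if i = j then 1 - t else 0)" for k i j
    unfolding V_def X_def by (rule sysB_fst_Suc)
  have Xsuc: "X (Suc k) $ j = (1/N) * (\<Sum>i\<in>UNIV. V (Suc k) $ i $ j)" for k j
    unfolding V_def X_def N_def by (rule sysB_snd_Suc)
  have inv: "(\<forall>i j. 0 \<le> V k $i$j) \<and> (\<forall>i. (\<Sum>j\<in>UNIV. V k $i$j) = 1) \<and> (\<forall>j. 0 \<le> X k $ j) \<and> (\<Sum>j\<in>UNIV. X k $ j) = 1" for k
  proof (induction k)
    case 0
    have "V 0 = mat 1" "X 0 = x0" by (simp_all add: V_def X_def)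
    thus ?case using x0nn x0sum by (simp add: mat_def)
  next
    case (Suc k)
    hence Vnn: "\<forall>i j. 0 \<le> V k $i$j" and Vrow: "\<forall>i. (\<Sum>j\<in>UNIV. V k $i$j) = 1"
      and Xnn: "\<forall>j. 0 \<le> X k $ j" and Xsum: "(\<Sum>j\<in>UNIV. X k $ j) = 1" by auto
    have Xle: "X k $ i \<le> 1" for i
    proof -
      have "X k $ i \<le> (\<Sum>j\<in>UNIV. X k $ j)" by (rule member_le_sum) (use Xnn in auto)
      thus ?thesis using Xsum by simp
    qed
    have Wnn: "0 \<le> Wmat C (X k) $ i $ l" for i l using Xnn Xle[of i] Cnn by (simp add: Wmat_entry)
    have Wrow: "(\<Sum>l\<in>UNIV. Wmat C (X k) $ i $ l) = 1" for i
      using Crow[rule_format, of i] by (simp add: Wmat_entry sum.distrib sum_distrib_left[symmetric])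
    have V'nn: "\<forall>i j. 0 \<le> V (Suc k) $i$j"
      unfolding Vsuc using Wnn Vnn t0 t1 by (auto intro!: add_nonneg_nonneg mult_nonneg_nonneg sum_nonneg)
    have V'row: "\<forall>i. (\<Sum>j\<in>UNIV. V (Suc k) $i$j) = 1"
    proof
      fix i
      have "(\<Sum>j\<in>UNIV. V (Suc k) $i$j) = t * (\<Sum>j\<in>UNIV. \<Sum>l\<in>UNIV. Wmat C (X k) $ i $ l * V k $ l $ j) + (1 - t)"
        unfolding Vsuc by (simp add: sum.distrib sum_distrib_left)
      also have "(\<Sum>j\<in>UNIV. \<Sum>l\<in>UNIV. Wmat C (X k) $ i $ l * V k $ l $ j) = (\<Sum>l\<in>UNIV. Wmat C (X k) $ i $ l * (\<Sum>j\<in>UNIV. V k $ l $ j))"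
        by (subst sum.swap) (simp add: sum_distrib_left)
      also have "\<dots> = 1" using Vrow Wrow by simp
      finally show "(\<Sum>j\<in>UNIV. V (Suc k) $i$j) = 1" by simp
    qed
    have X'nn: "\<forall>j. 0 \<le> X (Suc k) $ j" unfolding Xsuc using V'nn N2 by (simp add: sum_nonneg)
    have "(\<Sum>j\<in>UNIV. X (Suc k) $ j) = (1/N) * (\<Sum>j\<in>UNIV. \<Sum>i\<in>UNIV. V (Suc k) $ i $ j)"
      unfolding Xsuc by (simp add: sum_distrib_left)
    also have "(\<Sum>j\<in>UNIV. \<Sum>i\<in>UNIV. V (Suc k) $ i $ j) = (\<Sum>i\<in>UNIV. \<Sum>j\<in>UNIV. V (Suc k) $ i $ j)" by (rule sum.swap)
    also have "\<dots> = N" using V'row by (simp add: N_def)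
    finally have "(\<Sum>j\<in>UNIV. X (Suc k) $ j) = 1" using N2 by simp
    thus ?case using V'nn V'row X'nn by blast
  qed
  have contr: "\<forall>i. (\<Sum>j\<in>UNIV. \<bar>V (Suc k) $i$j - Vs$i$j\<bar>) \<le> 2 * \<rho> ^ k" for k
  proof (induction k)
    case 0
    show ?case
    proof
      fix i
      have "(\<Sum>j\<in>UNIV. \<bar>V (Suc 0) $i$j - Vs$i$j\<bar>) \<le> (\<Sum>j\<in>UNIV. V (Suc 0) $i$j + Vs$i$j)"
      proof (rule sum_mono)
        fix j
        have "0 \<le> V (Suc 0) $i$j" "0 \<le> Vs$i$j" using inv[of "Suc 0"] Vsnn by auto
        thus "\<bar>V (Suc 0) $i$j - Vs$i$j\<bar> \<le> V (Suc 0) $i$j + Vs$i$j" by linarith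
      qed
      also have "\<dots> = 2" using inv[of "Suc 0"] Vsrow by (simp add: sum.distrib)
      finally show "(\<Sum>j\<in>UNIV. \<bar>V (Suc 0) $i$j - Vs$i$j\<bar>) \<le> 2 * \<rho> ^ 0" by simp
    qed
  next
    case (Suc k)
    show ?case
    proof
      fix i
      have "(\<Sum>j\<in>UNIV. \<bar>V (Suc (Suc k)) $i$j - Vs$i$j\<bar>) \<le> (t + N/(N-1)*(1-t)*(1 - Vs$i$i)) * (2 * \<rho> ^ k)"
        unfolding N_def
      proof (rule step)
        show "\<forall>i j. 0 \<le> C$i$j" "\<forall>i. (\<Sum>j\<in>UNIV. C$i$j) = 1" "0 < t" "t < 1" "2 \<le> CARD('n)"
          using Cnn Crow t0 t1 n2 by auto
        show "\<forall>i j. 0 \<le> V (Suc k) $ i $ j" "\<forall>i. (\<Sum>j\<in>UNIV. V (Suc k) $ i $ j) = 1" using inv by auto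
        show "\<forall>j. X (Suc k) $ j = (1/real CARD('n)) * (\<Sum>i\<in>UNIV. V (Suc k) $ i $ j)"
          using Xsuc[unfolded N_def] by blast
        show "\<forall>i j. 0 \<le> Vs$i$j" "\<forall>i. (\<Sum>j\<in>UNIV. Vs$i$j) = 1" "\<forall>j. (\<Sum>i\<in>UNIV. Vs$i$j) = 1"
          using Vsnn Vsrow Vscol by auto
        show "\<forall>i j. Vs$i$j = t * (\<Sum>l\<in>UNIV. Wmat C (\<chi> i. 1/real CARD('n)) $ i $ l * Vs$l$j) + (if i = j then 1 - t else 0)"
          using Vsfix[unfolded N_def] .
        show "\<forall>i j. (\<Sum>l\<in>UNIV. ((if i = l then 1 else 0) - C$i$l) * Vs$l$j) = (real CARD('n)/(real CARD('n)-1)*(1-t)/t) * ((if i = j then 1 else 0) - Vs$i$j)"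
          using Vskap[unfolded N_def] .
        show "\<forall>l. (\<Sum>j\<in>UNIV. \<bar>V (Suc k) $ l $ j - Vs$l$j\<bar>) \<le> 2 * \<rho> ^ k" using Suc.IH .
        show "\<forall>i j. V (Suc (Suc k)) $ i $ j = t * (\<Sum>l\<in>UNIV. Wmat C (X (Suc k)) $ i $ l * V (Suc k) $ l $ j) + (if i = j then 1 - t else 0)"
          by (intro allI) (rule Vsuc)
      qed
      also have "\<dots> \<le> \<rho> * (2 * \<rho> ^ k)"
      proof (rule mult_right_mono)
        have "1 - Vs$i$i \<le> 1 - m" using mi by (simp add: m_def)
        hence "N/(N-1)*(1-t)*(1 - Vs$i$i) \<le> N/(N-1)*(1-t)*(1 - m)"
          using Nm1 t1 N2 by (intro mult_left_mono) auto
        thus "t + N/(N-1)*(1-t)*(1 - Vs$i$i) \<le> \<rho>" by (simp add: \<rho>_def)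
        show "0 \<le> 2 * \<rho> ^ k" using rho_ge t0 by simp
      qed
      finally show "(\<Sum>j\<in>UNIV. \<bar>V (Suc (Suc k)) $i$j - Vs$i$j\<bar>) \<le> 2 * \<rho> ^ Suc k" by simp
    qed
  qed
  define c where "c = 2 * N / \<rho>"
  have rpos: "\<rho> > 0" using rho_ge t0 by simp
  have bound: "norm (X k - (\<chi> i. 1 / N)) \<le> c * \<rho> ^ k" for k
  proof (cases k)
    case 0
    have "norm (X k - (\<chi> i. 1 / N)) \<le> (\<Sum>j\<in>UNIV. \<bar>(X k - (\<chi> i. 1 / N)) $ j\<bar>)" by (rule norm_le_l1_cart)
    also have "\<dots> \<le> (\<Sum>j\<in>UNIV. x0 $ j + 1/N)"
    proof (rule sum_mono)
      fix j
      have "0 \<le> x0$j" "0 \<le> 1/N" using x0nn N2 by auto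
      moreover have "(X k - (\<chi> i. 1 / N)) $ j = x0$j - 1/N" using 0 by (simp add: X_def)
      ultimately show "\<bar>(X k - (\<chi> i. 1 / N)) $ j\<bar> \<le> x0 $ j + 1/N" by linarith
    qed
    also have "\<dots> = 2" using x0sum N2 by (simp add: sum.distrib N_def)
    also have "2 \<le> c" using rpos rho_lt N2 by (simp add: c_def field_simps)
    finally show ?thesis using 0 by simp
  next
    case (Suc k')
    have "norm (X k - (\<chi> i. 1 / N)) \<le> (\<Sum>j\<in>UNIV. \<bar>(X k - (\<chi> i. 1 / N)) $ j\<bar>)" by (rule norm_le_l1_cart)
    also have "\<dots> \<le> (\<Sum>j\<in>(UNIV::'n set). 2 * \<rho> ^ k')"
    proof (rule sum_mono)
      fix j
      have "(X k - (\<chi> i. 1 / N)) $ j = (1/N) * (\<Sum>i\<in>UNIV. V k $ i $ j - Vs $ i $ j)"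
        using Vscol unfolding Suc by (simp add: Xsuc sum_subtractf right_diff_distrib)
      hence "\<bar>(X k - (\<chi> i. 1 / N)) $ j\<bar> \<le> (1/N) * (\<Sum>i\<in>UNIV. \<bar>V k $ i $ j - Vs $ i $ j\<bar>)"
        using N2 by (simp add: abs_mult divide_right_mono sum_abs)
      also have "\<dots> \<le> (1/N) * (\<Sum>i\<in>(UNIV::'n set). 2 * \<rho> ^ k')"
      proof (intro mult_left_mono sum_mono)
        fix i
        have "\<bar>V k $ i $ j - Vs $ i $ j\<bar> \<le> (\<Sum>j\<in>UNIV. \<bar>V k $ i $ j - Vs $ i $ j\<bar>)"
          by (rule member_le_sum) auto
        thus "\<bar>V k $ i $ j - Vs $ i $ j\<bar> \<le> 2 * \<rho> ^ k'" using contr[of k', rule_format, of i] unfolding Suc by linarith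
      qed (use N2 in simp)
      also have "\<dots> = 2 * \<rho> ^ k'" using N2 by (simp add: N_def)
      finally show "\<bar>(X k - (\<chi> i. 1 / N)) $ j\<bar> \<le> 2 * \<rho> ^ k'" .
    qed
    also have "\<dots> = c * \<rho> ^ k" using rpos unfolding Suc by (simp add: c_def N_def)
    finally show ?thesis .
  qed
  show ?thesis
  proof (intro exI conjI allI)
    show "0 \<le> c" using rpos N2 by (simp add: c_def)
    show "0 \<le> \<rho>" using rpos by simp
    show "\<rho> < 1" by (rule rho_lt)
    fix k
    show "norm (snd (sysB C (\<chi> i. \<theta>0) x0 k) - (\<chi> i. 1 / real CARD('n))) \<le> c * \<rho> ^ k"
      using bound[of k] by (simp add: X_def t_def N_def)
  qed
qed


end
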